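(* For every $k\in\{1,\dots,n-1\}$, every $v\in\wedge^k H_1$ and every generator $\sigma_t\in B_n$ ($1\le t\le n-1$), \[\psi_k(\sigma_t\cdot v)=q^{k-1}\,\sigma_t\cdot\psi_k(v),\] where on the left $\sigma_t$ acts diagonally on $\wedge^kH_1$, i.e. $\sigma_t\cdot(x_1\wedge\cdots\wedge x_k)=(\sigma_t\cdot x_1)\wedge\cdots\wedge(\sigma_t\cdot x_k)$, and on the right $\sigma_t$ acts on $H_k\subset V^{\otimes n}$ via $\Phi$.
   Context: Let $U=U_q(\mathfrak{gl}(1|1))$ be the unital superalgebra over $\mathbb{C}(q)$ generated by odd elements $E,F$ and even elements $\mathbf q^h$ ($h\in P^*=\mathbb{Z}h_1\oplus\mathbb{Z}h_2$) with relations $\mathbf q^0=1$, $\mathbf q^h\mathbf q^{h'}=\mathbf q^{h+h'}$, $\mathbf q^hE=q^{\langle h,\alpha\rangle}E\mathbf q^h$, $\mathbf q^hF=q^{-\langle h,\alpha\rangle}F\mathbf q^h$, $EF+FE=\frac{K-K^{-1}}{q-q^{-1}}$ with $K=\mathbf q^{h_1+h_2}$, $E^2=F^2=0$; here $P=\mathbb{Z}\epsilon_1\oplus\mathbb{Z}\epsilon_2$ with $\{\epsilon_1,\epsilon_2\}$ dual to $\{h_1,h_2\}$ and $\alpha=\epsilon_1-\epsilon_2$. Comultiplication: $\Delta(E)=E\otimes K^{-1}+1\otimes E$, $\Delta(F)=F\otimes1+K\otimes F$, $\Delta(\mathbf q^h)=\mathbf q^h\otimes\mathbf q^h$; on tensor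 products one uses the Koszul sign rule $(X\otimes Y)(a\otimes b)=(-1)^{|Y||a|}Xa\otimes Yb$. $V$ has basis $v_0$ (even), $v_1$ (odd) with $Ev_0=0,Ev_1=v_0,Fv_0=v_1,Fv_1=0$, $\mathbf q^hv_0=q^{\langle h,\epsilon_1\rangle}v_0$, $\mathbf q^hv_1=q^{\langle h,\epsilon_2\rangle}v_1$. Fix $n\ge2$; $U$ acts on $V^{\otimes n}$ via iterated comultiplication. For $0\le k\le n-1$, $H_k=\{v\in V^{\otimes n}: Ev=0,\ \mathbf q^hv=q^{\langle h,(n-k)\epsilon_1+k\epsilon_2\rangle}v\ \forall h\in P^*\}$. Braid action: $\check R:V\otimes V\to V\otimes V$ is given by $\check R(v_0\otimes v_0)=qv_0\otimes v_0$, $\check R(v_1\otimes v_0)=v_0\otimes v_1$, $\check R(v_0\otimes v_1)=v_1\otimes v_0+(q-q^{-1})v_0\otimes v_1$, $\check R(v_1\otimes v_1)=-q^{-1}v_1\otimes v_1$; $\Phi(\sigma_t)=\mathrm{id}^{\otimes(t-1)}\otimes\check R\otimes\mathrm{id}^{\otimes(n-t-1)}$ defines an action $\Phi$ of $B_n$ on $V^{\otimes n}$ commuting with $U$, hence preserving each $H_k$; write $\sigma\cdot v=\Phi(\sigma)v$. For $1\le i\le n-1$ let $e_i=v_0^{\otimes(i-1)}\otimes(q^{-1}v_0\otimes v_1-v_1\otimes v_0)\otimes v_0^{\otimes(n-1-i)}$; these form a basis of $H_1$. For $1\le i\le n$ let $w_i=v_0^{\otimes(i-1)}\otimes v_1\otimes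 v_0^{\otimes(n-i)}$ and $U'=\mathrm{span}\{w_i\}$; note $e_i=-w_i+q^{-1}w_{i+1}$, so $H_1\subset U'$. Let $\psi:\wedge^*U'\to V^{\otimes n}$ be the $\mathbb{C}(q)$-linear map with $\psi(w_{i_1}\wedge\cdots\wedge w_{i_k})=v_{\alpha_1}\otimes\cdots\otimes v_{\alpha_n}$ for $i_1<\cdots<i_k$, where $\alpha_j=1$ if $j\in\{i_1,\dots,i_k\}$ and $\alpha_j=0$ otherwise. $\psi_k$ is the restriction of $\psi$ to $\wedge^kH_1$; it is an isomorphism $\wedge^kH_1\to H_k$. *)

theory Defs
  imports "HOL-Computational_Algebra.Polynomial" "HOL-Computational_Algebra.Fraction_Field"
          "HOL-Combinatorics.Permutations"
begin

type_synonym ratfun = "complex poly fract"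

definition qq :: ratfun where
  "qq = Fract [:0, 1:] 1"

text \<open>The basis vector v_{\<alpha>1} \<otimes> ... \<otimes> v_{\<alpha>n} is indexed by the
  set S = {j. \<alpha>j = 1} \<subseteq> {1..n}; a vector is its coordinate function.\<close>
type_synonym vec = "nat set \<Rightarrow> ratfun"

definition tensor_space :: "nat \<Rightarrow> vec set" where
  "tensor_space n = {f. \<forall>S. f S \<noteq> 0 \<longrightarrow> S \<subseteq> {1..n}}"

definition tbasis :: "nat set \<Rightarrow> vec" where
  "tbasis S = (\<lambda>T. if T = S then 1 else 0)"

definition fin_lincombs :: "vec set \<Rightarrow> vec set" where
  "fin_lincombs A = {v. \<exists>(m::nat) c x. (\<forall>i<m. x i \<in> A) \<and> v = (\<lambda>T. \<Sum>i<m. c i * x i T)}"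

text \<open>Action of E via iterated coproduct: E acts at position j, K^{-1} (= q^{-1} on V) at
  positions > j, identity before; Koszul sign (-1)^{number of odd factors before j}.\<close>
definition E_coef :: "nat \<Rightarrow> nat set \<Rightarrow> nat set \<Rightarrow> ratfun" where
  "E_coef n S T = (\<Sum>j\<in>S. if T = S - {j}
      then (-1) ^ card {i\<in>S. i < j} * qq powi (- int (n - j)) else 0)"

definition E_act :: "nat \<Rightarrow> vec \<Rightarrow> vec" where
  "E_act n f = (\<lambda>T. \<Sum>S\<in>Pow {1..n}. f S * E_coef n S T)"

text \<open>Action of q^h for h = a h1 + b h2: v_S has weight (n - |S|) \<epsilon>1 + |S| \<epsilon>2.\<close>
definition qh_act :: "nat \<Rightarrow> int \<Rightarrow> int \<Rightarrow> vec \<Rightarrow> vec" where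
  "qh_act n a b f = (\<lambda>S. qq powi (a * int (n - card S) + b * int (card S)) * f S)"

definition Hspace :: "nat \<Rightarrow> nat \<Rightarrow> vec set" where
  "Hspace n k = {v \<in> tensor_space n. E_act n v = (\<lambda>_. 0) \<and>
      (\<forall>a b. qh_act n a b v = (\<lambda>S. qq powi (a * int (n - k) + b * int k) * v S))}"

text \<open>Phi(sigma_t) = id^{t-1} \<otimes> R \<otimes> id^{n-t-1} on basis vectors (R is even, so no signs).\<close>
definition Phi_basis :: "nat \<Rightarrow> nat set \<Rightarrow> vec" where
  "Phi_basis t S =
    (if t \<notin> S \<and> Suc t \<notin> S then (\<lambda>T. qq * tbasis S T)
     else if t \<in> S \<and> Suc t \<notin> S then tbasis (insert (Suc t) (S - {t}))
     else if t \<notin> S \<and> Suc t \<in> S then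
       (\<lambda>T. tbasis (insert t (S - {Suc t})) T + (qq - inverse qq) * tbasis S T)
     else (\<lambda>T. - inverse qq * tbasis S T))"

definition Phi :: "nat \<Rightarrow> nat \<Rightarrow> vec \<Rightarrow> vec" where
  "Phi n t f = (\<lambda>T. \<Sum>S\<in>Pow {1..n}. f S * Phi_basis t S T)"

text \<open>Exterior powers of U' = span{w_1..w_n}.  An element of U' \<subseteq> V^{\<otimes> n} has w_i-coordinate
  x {i}.  An element of \<wedge>^k U' is given by its coordinates with respect to the basis
  w_{i1} \<wedge> ... \<wedge> w_{ik} (i1 < ... < ik), indexed by the set {i1,...,ik}.\<close>
definition wedge :: "nat \<Rightarrow> vec list \<Rightarrow> vec" where
  "wedge n xs = (\<lambda>S. if S \<subseteq> {1..n} \<and> card S = length xs then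
      (\<Sum>p | p permutes {..<length xs}. of_int (sign p) *
         (\<Prod>j<length xs. (xs ! j) {sorted_list_of_set S ! p j}))
    else 0)"

definition wedge_H1 :: "nat \<Rightarrow> nat \<Rightarrow> vec set" where
  "wedge_H1 n k = fin_lincombs {wedge n xs | xs. length xs = k \<and> set xs \<subseteq> Hspace n 1}"

definition wedge_act :: "nat \<Rightarrow> nat \<Rightarrow> vec \<Rightarrow> vec" where
  "wedge_act n t f = (\<lambda>T. \<Sum>S\<in>Pow {1..n}.
      f S * wedge n (map (\<lambda>i. Phi n t (tbasis {i})) (sorted_list_of_set S)) T)"

text \<open>psi : \<wedge>^* U' \<rightarrow> V^{\<otimes> n}, w_{i1} \<wedge> ... \<wedge> w_{ik} \<mapsto> v_{\<alpha>} with \<alpha> the indicator of {i1..ik}.\<close>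
definition psi :: "nat \<Rightarrow> vec \<Rightarrow> vec" where
  "psi n f = (\<lambda>T. \<Sum>S\<in>Pow {1..n}. f S * tbasis S T)"

end

theory Submission
  imports Defs
begin

lemma qq_nz: "qq \<noteq> 0" unfolding qq_def by (simp add: Zero_fract_def eq_fract)

lemma Phi_tbasis: "S \<subseteq> {1..n} \<Longrightarrow> Phi n t (tbasis S) = Phi_basis t S"
proof
  fix T assume S: "S \<subseteq> {1..n}"
  have "Phi n t (tbasis S) T = (\<Sum>Sa\<in>Pow {1..n}. if Sa = S then Phi_basis t Sa T else 0)"
    unfolding Phi_def by (intro sum.cong) (auto simp: tbasis_def)
  also have "\<dots> = Phi_basis t S T" using S by (simp add: sum.delta')
  finally show "Phi n t (tbasis S) T = Phi_basis t S T" .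
qed

lemma g_t: "Phi_basis t {t} {x} = (if x = Suc t then 1 else 0)"
  by (auto simp: Phi_basis_def tbasis_def)
lemma g_t1: "Phi_basis t {Suc t} {x} = (if x = t then 1 else 0) + (qq - inverse qq) * (if x = Suc t then 1 else 0)"
  by (auto simp: Phi_basis_def tbasis_def)
lemma g_o: "i \<noteq> t \<Longrightarrow> i \<noteq> Suc t \<Longrightarrow> Phi_basis t {i} {x} = (if x = i then qq else 0)"
  by (auto simp: Phi_basis_def tbasis_def)

lemma permsum_zero:
  fixes f :: "nat \<Rightarrow> nat \<Rightarrow> ratfun"
  assumes "finite T" "card T = k" "length r = k"
    and supp: "\<And>j x. j < k \<Longrightarrow> f j x \<noteq> 0 \<Longrightarrow> x = r ! j"
    and ne: "set r \<noteq> T"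
  shows "(\<Sum>p | p permutes {..<k}. of_int (sign p) * (\<Prod>j<k. f j (sorted_list_of_set T ! p j))) = 0"
proof (rule sum.neutral, rule ballI)
  fix p assume "p \<in> {p. p permutes {..<k}}"
  hence p: "p permutes {..<k}" by simp
  let ?s = "sorted_list_of_set T"
  have ls: "length ?s = k" using assms by simp
  show "of_int (sign p) * (\<Prod>j<k. f j (?s ! p j)) = 0"
  proof (rule ccontr)
    assume "of_int (sign p) * (\<Prod>j<k. f j (?s ! p j)) \<noteq> 0"
    hence "\<forall>j<k. f j (?s ! p j) \<noteq> 0" by auto
    hence e: "\<forall>j<k. ?s ! p j = r ! j" using supp by blast
    have "set r = (\<lambda>j. r ! j) ` {..<k}" using assms(3) by (auto simp: set_conv_nth)
    also have "\<dots> = (\<lambda>j. ?s ! j) ` (p ` {..<k})" using e by (auto simp: image_iff)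
    also have "p ` {..<k} = {..<k}" using p by (simp add: permutes_image)
    also have "(\<lambda>j. ?s ! j) ` {..<k} = set ?s" using ls by (auto simp: set_conv_nth)
    also have "\<dots> = T" using assms by simp
    finally show False using ne by simp
  qed
qed

lemma permsum_one:
  fixes f :: "nat \<Rightarrow> nat \<Rightarrow> ratfun"
  assumes "finite T" "card T = k"
    and supp: "\<And>j x. j < k \<Longrightarrow> f j x \<noteq> 0 \<Longrightarrow> x = r ! j"
    and p0: "p0 permutes {..<k}" and p0e: "\<And>j. j < k \<Longrightarrow> sorted_list_of_set T ! p0 j = r ! j"
  shows "(\<Sum>p | p permutes {..<k}. of_int (sign p) * (\<Prod>j<k. f j (sorted_list_of_set T ! p j)))
     = of_int (sign p0) * (\<Prod>j<k. f j (r ! j))"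
proof -
  let ?s = "sorted_list_of_set T"
  have ls: "length ?s = k" using assms by simp
  have ds: "distinct ?s" by simp
  have fin: "finite {p. p permutes {..<k}}" by (simp add: finite_permutations)
  have "(\<Sum>p | p permutes {..<k}. of_int (sign p) * (\<Prod>j<k. f j (?s ! p j)))
     = of_int (sign p0) * (\<Prod>j<k. f j (?s ! p0 j))"
  proof -
   have "(\<Sum>p | p permutes {..<k}. of_int (sign p) * (\<Prod>j<k. f j (?s ! p j)))
     = (\<Sum>p \<in> {p0}. of_int (sign p) * (\<Prod>j<k. f j (?s ! p j)))"
   proof (rule sum.mono_neutral_right[OF fin], use p0 in simp, rule ballI)
    fix p assume "p \<in> {p. p permutes {..<k}} - {p0}"
    hence p: "p permutes {..<k}" and ne: "p \<noteq> p0" by auto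
    show "of_int (sign p) * (\<Prod>j<k. f j (?s ! p j)) = 0"
    proof (rule ccontr)
      assume "of_int (sign p) * (\<Prod>j<k. f j (?s ! p j)) \<noteq> 0"
      hence "\<forall>j<k. f j (?s ! p j) \<noteq> 0" by auto
      hence e: "\<forall>j<k. ?s ! p j = r ! j" using supp by blast
      have "p = p0"
      proof
        fix j show "p j = p0 j"
        proof (cases "j < k")
          case True
          have a: "p j < k" using p True using permutes_in_image[of _ "{..<k}"] by blast
          have b: "p0 j < k" using p0 True using permutes_in_image[of _ "{..<k}"] by blast
          have "?s ! p j = ?s ! p0 j" using e p0e True by simp
          thus ?thesis using nth_eq_iff_index_eq[OF ds] a b ls by simp
        next
          case False
          thus ?thesis using p p0 by (simp add: permutes_not_in)
        qed
      qed
      thus False using ne by simp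
    qed
   qed
   thus ?thesis by simp
  qed
  also have "(\<Prod>j<k. f j (?s ! p0 j)) = (\<Prod>j<k. f j (r ! j))"
    using p0e by (intro prod.cong) auto
  finally show ?thesis .
qed

lemma helper:
  fixes f :: "nat \<Rightarrow> nat \<Rightarrow> ratfun"
  assumes "sorted r" "distinct r" "set r \<subseteq> {1..n}" "length r = k"
    and supp: "\<And>j x. j < k \<Longrightarrow> f j x \<noteq> 0 \<Longrightarrow> x = r ! j"
  shows "(if T \<subseteq> {1..n} \<and> card T = k then
     (\<Sum>p | p permutes {..<k}. of_int (sign p) * (\<Prod>j<k. f j (sorted_list_of_set T ! p j))) else 0)
    = (if T = set r then (\<Prod>j<k. f j (r ! j)) else 0)"
proof (cases "T = set r")
  case True
  have c: "card T = k" using True assms by (simp add: distinct_card)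
  have so: "sorted_list_of_set T = r" using True assms by (simp add: sorted_list_of_set.idem_if_sorted_distinct)
  have "(\<Sum>p | p permutes {..<k}. of_int (sign p) * (\<Prod>j<k. f j (sorted_list_of_set T ! p j)))
     = of_int (sign (id::nat\<Rightarrow>nat)) * (\<Prod>j<k. f j (r ! j))"
    by (rule permsum_one[OF _ c supp permutes_id]) (use True so in auto)
  thus ?thesis using True c assms(3) by simp
next
  case False
  show ?thesis
  proof (cases "T \<subseteq> {1..n} \<and> card T = k")
    case True
    hence fT: "finite T" using finite_subset by blast
    show ?thesis using permsum_zero[OF fT _ assms(4) supp] True False by auto
  qed (use False in auto)
qed

lemma wedge_formula:
  assumes "S \<subseteq> {1..n}"
  shows "wedge n (map (\<lambda>i. Phi n t (tbasis {i})) (sorted_list_of_set S)) T =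
    (if T \<subseteq> {1..n} \<and> card T = card S then
     (\<Sum>p | p permutes {..<card S}. of_int (sign p) *
        (\<Prod>j<card S. Phi_basis t {sorted_list_of_set S ! j} {sorted_list_of_set T ! p j})) else 0)"
proof -
  have fS: "finite S" using assms finite_subset by blast
  let ?s = "sorted_list_of_set S"
  have ls: "length ?s = card S" using fS by simp
  have inS: "\<And>j. j < card S \<Longrightarrow> ?s ! j \<in> S" using fS ls nth_mem[of _ ?s] by (metis set_sorted_list_of_set)
  have m: "\<And>j. j < card S \<Longrightarrow> Phi n t (tbasis {?s ! j}) = Phi_basis t {?s ! j}"
  proof -
    fix j assume j: "j < card S"
    have "{?s ! j} \<subseteq> {1..n}" using inS[OF j] assms by auto
    thus "Phi n t (tbasis {?s ! j}) = Phi_basis t {?s ! j}"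
      using j ls by (simp add: Phi_tbasis)
  qed
  have pr: "\<And>p. (\<Prod>j<card S. (map (\<lambda>i. Phi n t (tbasis {i})) ?s ! j) {sorted_list_of_set T ! p j})
     = (\<Prod>j<card S. Phi_basis t {?s ! j} {sorted_list_of_set T ! p j})"
    by (rule prod.cong) (simp_all add: m ls)
  show ?thesis unfolding wedge_def length_map ls pr ..
qed

lemma prod_split:
  fixes F Fa Fb :: "nat \<Rightarrow> ratfun"
  assumes "finite A" "a \<in> A" "\<And>j. j \<in> A \<Longrightarrow> j \<noteq> a \<Longrightarrow> F j = Fa j \<and> F j = Fb j"
    "F a = Fa a + c * Fb a"
  shows "prod F A = prod Fa A + c * prod Fb A"
proof -
  have e1: "prod F (A - {a}) = prod Fa (A - {a})" "prod F (A - {a}) = prod Fb (A - {a})"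
    using assms(3) by (intro prod.cong; simp)+
  show ?thesis
    using prod.remove[OF assms(1,2), of F] prod.remove[OF assms(1,2), of Fa] prod.remove[OF assms(1,2), of Fb]
      e1 assms(4) by (simp add: algebra_simps)
qed

lemma prod_nth_set:
  fixes G :: "nat \<Rightarrow> ratfun"
  assumes "distinct s"
  shows "(\<Prod>j<length s. G (s ! j)) = (\<Prod>i\<in>set s. G i)"
  using prod.reindex_bij_betw[OF bij_betw_nth[OF assms refl refl], of G] by simp

lemma sorted_map_mono:
  assumes "sorted_wrt (<) s" "\<And>x y. x \<in> set s \<Longrightarrow> y \<in> set s \<Longrightarrow> x < y \<Longrightarrow> h x \<le> (h y::nat)"
  shows "sorted (map h s)"
  unfolding sorted_map by (rule sorted_wrt_mono_rel[OF _ assms(1)]) (use assms(2) in auto)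

lemma prod_remove_const:
  fixes G :: "nat \<Rightarrow> ratfun"
  assumes "finite S" "a \<in> S" "\<And>i. i \<in> S \<Longrightarrow> i \<noteq> a \<Longrightarrow> G i = qq"
  shows "prod G S = G a * qq ^ (card S - 1)"
proof -
  have "prod G (S - {a}) = prod (\<lambda>_. qq) (S - {a})"
    by (rule prod.cong) (use assms(3) in auto)
  hence "prod G (S - {a}) = qq ^ card (S - {a})" by simp
  thus ?thesis using prod.remove[OF assms(1,2), of G] assms by simp
qed

lemma key:
  assumes S: "S \<subseteq> {1..n}" and k: "card S = k" "1 \<le> k" and t: "1 \<le> t" "Suc t \<le> n"
  shows "wedge n (map (\<lambda>i. Phi n t (tbasis {i})) (sorted_list_of_set S)) T = qq ^ (k - 1) * Phi_basis t S T"
proof -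
  have fS: "finite S" using S finite_subset by blast
  define s where "s = sorted_list_of_set S"
  have ls: "length s = k" using fS k s_def by simp
  have ds: "distinct s" and sets: "set s = S" and sos: "sorted s" using fS s_def by auto
  have strs: "sorted_wrt (<) s" using ds sos by (simp add: strict_sorted_iff)
  have sj: "\<And>j. j < k \<Longrightarrow> s ! j \<in> S" using ls sets nth_mem by blast
  define PS where "PS = (\<lambda>(F::nat\<Rightarrow>nat\<Rightarrow>ratfun) (T::nat set). (\<Sum>p | p permutes {..<k}. of_int (sign p) *
        (\<Prod>j<k. (F (s ! j) (sorted_list_of_set T ! p j) :: ratfun))))"
  define g where "g = (\<lambda>i x. Phi_basis t {i} {x})"
  have W: "wedge n (map (\<lambda>i. Phi n t (tbasis {i})) (sorted_list_of_set S)) T =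
     (if T \<subseteq> {1..n} \<and> card T = k then PS g T else 0)"
    unfolding wedge_formula[OF S] PS_def g_def s_def k ..
  have H: "(if T \<subseteq> {1..n} \<and> card T = k then PS F T else 0)
      = (if T = h ` S then (\<Prod>i\<in>S. F i (h i)) else 0)"
    if "sorted (map h s)" "inj_on h S" "h ` S \<subseteq> {1..n}"
       "\<And>i x. i \<in> S \<Longrightarrow> F i x \<noteq> 0 \<Longrightarrow> x = h i" for F h
  proof -
    have "(if T \<subseteq> {1..n} \<and> card T = k then PS F T else 0)
      = (if T = set (map h s) then (\<Prod>j<k. F (s ! j) (map h s ! j)) else 0)"
      unfolding PS_def
      by (rule helper) (use that ds ls sets sj in \<open>auto simp: distinct_map\<close>)
    also have "(\<Prod>j<k. F (s ! j) (map h s ! j)) = (\<Prod>j<length s. F (s ! j) (h (s ! j)))"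
      using ls by (intro prod.cong) auto
    also have "\<dots> = (\<Prod>i\<in>S. F i (h i))" using prod_nth_set[OF ds] sets by simp
    finally show ?thesis using sets by simp
  qed
  show ?thesis
  proof (cases "t \<in> S")
    case tS: False
    show ?thesis
    proof (cases "Suc t \<in> S")
      case t1S: False
      have "(if T \<subseteq> {1..n} \<and> card T = k then PS g T else 0)
        = (if T = id ` S then (\<Prod>i\<in>S. g i (id i)) else 0)"
      proof (rule H)
        fix i x assume i: "i \<in> S" and gx: "g i x \<noteq> 0"
        have "i \<noteq> t" "i \<noteq> Suc t" using i tS t1S by auto
        thus "x = id i" using gx g_o by (auto simp: g_def split: if_splits)
      qed (use sos S in auto)
      also have "(\<Prod>i\<in>S. g i (id i)) = (\<Prod>i\<in>S. qq)"
        by (rule prod.cong) (use tS t1S in \<open>auto simp: g_def Phi_basis_def tbasis_def\<close>)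
      finally show ?thesis using W tS t1S k
        by (simp add: Phi_basis_def tbasis_def power_eq_if)
    next
      case t1S: True
      obtain j0 where j0: "j0 < k" "s ! j0 = Suc t" using t1S sets ls by (metis in_set_conv_nth)
      define c where "c = qq - inverse qq"
      define FA where "FA = (\<lambda>i x. if i = Suc t then (if x = t then 1 else 0) else g i x)"
      define FB where "FB = (\<lambda>i x. if i = Suc t then (if x = Suc t then 1 else 0) else g i x)"
      have spl: "(\<Prod>j<k. g (s ! j) (y j)) = (\<Prod>j<k. FA (s ! j) (y j)) + c * (\<Prod>j<k. FB (s ! j) (y j))" for y
      proof (rule prod_split[where a=j0])
        fix j assume "j \<in> {..<k}" "j \<noteq> j0"
        hence "s ! j \<noteq> Suc t" using j0 ds ls nth_eq_iff_index_eq by fastforce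
        thus "g (s ! j) (y j) = FA (s ! j) (y j) \<and> g (s ! j) (y j) = FB (s ! j) (y j)"
          by (simp add: FA_def FB_def)
      qed (use j0 in \<open>auto simp: FA_def FB_def g_def g_t1 c_def\<close>)
      have PSs: "PS g T = PS FA T + c * PS FB T"
        unfolding PS_def spl by (simp add: sum.distrib sum_distrib_left algebra_simps)
      define h where "h = (\<lambda>i. if i = Suc t then t else i)"
      have HA: "(if T \<subseteq> {1..n} \<and> card T = k then PS FA T else 0)
        = (if T = h ` S then (\<Prod>i\<in>S. FA i (h i)) else 0)"
      proof (rule H)
        show "sorted (map h s)"
          by (rule sorted_map_mono[OF strs]) (use tS sets in \<open>auto simp: h_def\<close>)
        show "inj_on h S" using tS by (auto simp: h_def inj_on_def)
        show "h ` S \<subseteq> {1..n}" using S t by (auto simp: h_def)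
        fix i x assume i: "i \<in> S" and gx: "FA i x \<noteq> 0"
        show "x = h i"
        proof (cases "i = Suc t")
          case True thus ?thesis using gx by (auto simp: FA_def h_def split: if_splits)
        next
          case False
          have "i \<noteq> t" using i tS by auto
          thus ?thesis using False gx g_o by (auto simp: FA_def g_def h_def split: if_splits)
        qed
      qed
      have HB: "(if T \<subseteq> {1..n} \<and> card T = k then PS FB T else 0)
        = (if T = id ` S then (\<Prod>i\<in>S. FB i (id i)) else 0)"
      proof (rule H)
        fix i x assume i: "i \<in> S" and gx: "FB i x \<noteq> 0"
        show "x = id i"
        proof (cases "i = Suc t")
          case True thus ?thesis using gx by (auto simp: FB_def split: if_splits)
        next
          case False
          have "i \<noteq> t" using i tS by auto
          thus ?thesis using False gx g_o by (auto simp: FB_def g_def split: if_splits)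
        qed
      qed (use sos S in auto)
      have pA: "(\<Prod>i\<in>S. FA i (h i)) = FA (Suc t) (h (Suc t)) * qq ^ (card S - 1)"
        by (rule prod_remove_const[OF fS t1S]) (use tS in \<open>auto simp: FA_def g_def Phi_basis_def tbasis_def h_def\<close>)
      have pB: "(\<Prod>i\<in>S. FB i (id i)) = FB (Suc t) (id (Suc t)) * qq ^ (card S - 1)"
        by (rule prod_remove_const[OF fS t1S]) (use tS in \<open>auto simp: FB_def g_def Phi_basis_def tbasis_def\<close>)
      have hS: "h ` S = insert t (S - {Suc t})" using t1S by (auto simp: h_def)
      have "wedge n (map (\<lambda>i. Phi n t (tbasis {i})) (sorted_list_of_set S)) T
        = (if T \<subseteq> {1..n} \<and> card T = k then PS FA T else 0)
          + c * (if T \<subseteq> {1..n} \<and> card T = k then PS FB T else 0)"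
        unfolding W PSs by simp
      also have "\<dots> = (if T = insert t (S - {Suc t}) then qq ^ (k - 1) else 0)
          + c * (if T = S then qq ^ (k - 1) else 0)"
        unfolding HA HB pA pB hS using k by (simp add: FA_def FB_def h_def)
      finally have wch: "wedge n (map (\<lambda>i. Phi n t (tbasis {i})) (sorted_list_of_set S)) T
        = (if T = insert t (S - {Suc t}) then qq ^ (k - 1) else 0)
          + c * (if T = S then qq ^ (k - 1) else 0)" .
      have "qq ^ (k - 1) * Phi_basis t S T
        = qq ^ (k - 1) * (tbasis (insert t (S - {Suc t})) T + c * tbasis S T)"
        using tS t1S by (simp add: Phi_basis_def c_def)
      also have "\<dots> = (if T = insert t (S - {Suc t}) then qq ^ (k - 1) else 0)
          + c * (if T = S then qq ^ (k - 1) else 0)"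
        by (simp add: tbasis_def algebra_simps)
      finally show ?thesis using wch by simp
    qed
  next
    case tS: True
    show ?thesis
    proof (cases "Suc t \<in> S")
      case t1S: False
      define h where "h = (\<lambda>i. if i = t then Suc t else i)"
      have "(if T \<subseteq> {1..n} \<and> card T = k then PS g T else 0)
        = (if T = h ` S then (\<Prod>i\<in>S. g i (h i)) else 0)"
      proof (rule H)
        show "sorted (map h s)"
          by (rule sorted_map_mono[OF strs]) (use t1S sets in \<open>auto simp: h_def\<close>)
        show "inj_on h S" using t1S by (auto simp: h_def inj_on_def)
        show "h ` S \<subseteq> {1..n}" using S t by (auto simp: h_def)
        fix i x assume i: "i \<in> S" and gx: "g i x \<noteq> 0"
        show "x = h i"
        proof (cases "i = t")
          case True thus ?thesis using gx by (auto simp: g_def g_t h_def split: if_splits)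
        next
          case False
          have "i \<noteq> Suc t" using i t1S by auto
          thus ?thesis using False gx g_o by (auto simp: g_def h_def split: if_splits)
        qed
      qed
      also have "(\<Prod>i\<in>S. g i (h i)) = g t (h t) * qq ^ (card S - 1)"
        by (rule prod_remove_const[OF fS tS]) (use t1S in \<open>auto simp: g_def Phi_basis_def tbasis_def h_def\<close>)
      also have "h ` S = insert (Suc t) (S - {t})" using tS by (auto simp: h_def)
      finally show ?thesis using W tS t1S k
        by (simp add: Phi_basis_def tbasis_def g_def g_t h_def)
    next
      case t1S: True
      obtain j0 where j0: "j0 < k" "s ! j0 = t" using tS sets ls by (metis in_set_conv_nth)
      obtain j1 where j1: "j1 < k" "s ! j1 = Suc t" using t1S sets ls by (metis in_set_conv_nth)
      have j01: "j0 \<noteq> j1" using j0 j1 by auto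
      have sne: "\<And>j j'. j < k \<Longrightarrow> j' < k \<Longrightarrow> s ! j = s ! j' \<Longrightarrow> j = j'"
        using ds ls nth_eq_iff_index_eq by metis
      have k2: "2 \<le> k"
      proof -
        have "{t, Suc t} \<subseteq> S" using tS t1S by auto
        hence "card {t, Suc t} \<le> card S" using fS card_mono by blast
        thus ?thesis using k by simp
      qed
      define F4 where "F4 = (\<lambda>i x. if i = Suc t then (if x = t then 1 else 0) else g i x)"
      define h where "h = (\<lambda>i. if i = t then Suc t else if i = Suc t then t else i)"
      have supp: "\<And>j x. j < k \<Longrightarrow> F4 (s ! j) x \<noteq> 0 \<Longrightarrow> x = map h s ! j"
      proof -
        fix j x assume j: "j < k" and gx: "F4 (s ! j) x \<noteq> 0"
        show "x = map h s ! j"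
        proof (cases "s ! j = t")
          case True thus ?thesis using gx j ls by (auto simp: F4_def g_def g_t h_def split: if_splits)
        next
          case False
          show ?thesis
          proof (cases "s ! j = Suc t")
            case True thus ?thesis using gx j ls by (auto simp: F4_def h_def split: if_splits)
          next
            case False2: False
            thus ?thesis using False gx j ls g_o by (auto simp: F4_def g_def h_def split: if_splits)
          qed
        qed
      qed
      have hS: "h ` S = S"
      proof -
        have "h ` S \<subseteq> S" using tS t1S by (auto simp: h_def)
        moreover have "S \<subseteq> h ` S"
        proof
          fix x assume x: "x \<in> S"
          have "h (h x) = x" by (auto simp: h_def)
          moreover have "h x \<in> S" using x tS t1S by (auto simp: h_def)
          ultimately show "x \<in> h ` S" by (metis imageI)
        qed
        ultimately show ?thesis by blast
      qed
      have lr: "length (map h s) = k" using ls by simp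
      have setr: "set (map h s) = S" using hS sets by simp
      show ?thesis
      proof (cases "T \<subseteq> {1..n} \<and> card T = k")
        case False
        hence "T \<noteq> S" using S k by auto
        hence "Phi_basis t S T = 0" by (simp add: Phi_basis_def tbasis_def tS t1S)
        moreover have "wedge n (map (\<lambda>i. Phi n t (tbasis {i})) (sorted_list_of_set S)) T = 0"
          by (simp only: W if_not_P[OF False])
        ultimately show ?thesis by simp
      next
        case C: True
        have fT: "finite T" using C finite_subset by blast
        define s' where "s' = sorted_list_of_set T"
        have ls': "length s' = k" and ds': "distinct s'" using C fT s'_def by auto
        have eq: "PS g T = PS F4 T"
          unfolding PS_def s'_def[symmetric]
        proof (rule sum.cong[OF refl])
          fix p assume "p \<in> {p. p permutes {..<k}}"
          hence p: "p permutes {..<k}" by simp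
          have pk: "\<And>j. j < k \<Longrightarrow> p j < k" using p permutes_in_image[of p "{..<k}"] by blast
          show "of_int (sign p) * (\<Prod>j<k. g (s ! j) (s' ! p j)) = of_int (sign p) * (\<Prod>j<k. F4 (s ! j) (s' ! p j))"
          proof (cases "s' ! p j1 = Suc t")
            case True
            have "p j0 \<noteq> p j1" using j01 p by (metis permutes_inj injD)
            hence "s' ! p j0 \<noteq> Suc t" using True ds' ls' pk j0 j1 nth_eq_iff_index_eq by metis
            hence z1: "g (s ! j0) (s' ! p j0) = 0" "F4 (s ! j0) (s' ! p j0) = 0"
              using j0 by (auto simp: g_def g_t F4_def)
            have zg: "(\<Prod>j<k. g (s ! j) (s' ! p j)) = 0" using z1 j0 by (metis finite_lessThan lessThan_iff prod_zero_iff)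
            have zf: "(\<Prod>j<k. F4 (s ! j) (s' ! p j)) = 0" using z1 j0 by (metis finite_lessThan lessThan_iff prod_zero_iff)
            show ?thesis by (simp only: zg zf)
          next
            case False
            have "(\<Prod>j<k. g (s ! j) (s' ! p j)) = (\<Prod>j<k. F4 (s ! j) (s' ! p j))"
            proof (rule prod.cong[OF refl])
              fix j assume j: "j \<in> {..<k}"
              show "g (s ! j) (s' ! p j) = F4 (s ! j) (s' ! p j)"
              proof (cases "s ! j = Suc t")
                case True
                hence "j = j1" using sne j j1 by auto
                thus ?thesis using True False by (simp add: F4_def g_def g_t1)
              qed (simp add: F4_def)
            qed
            thus ?thesis by simp
          qed
        qed
        show ?thesis
        proof (cases "T = S")
          case False
          have "PS F4 T = 0" unfolding PS_def
            by (rule permsum_zero[OF fT _ lr supp]) (use C setr False in auto)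
          thus ?thesis using W C eq False by (simp add: Phi_basis_def tbasis_def tS t1S)
        next
          case True
          have so: "s' = s" using True s'_def s_def by simp
          have "PS F4 T = of_int (sign (Transposition.transpose j0 j1)) * (\<Prod>j<k. F4 (s ! j) (map h s ! j))"
            unfolding PS_def
          proof (rule permsum_one[OF fT _ supp])
            show "card T = k" using C by simp
            show "Transposition.transpose j0 j1 permutes {..<k}" using j0 j1 by (simp add: permutes_swap_id)
            fix j assume j: "j < k"
            show "sorted_list_of_set T ! Transposition.transpose j0 j1 j = map h s ! j"
            proof -
              have "s ! Transposition.transpose j0 j1 j = h (s ! j)"
              proof (cases "j = j0")
                case True thus ?thesis using j0 j1 by (simp add: h_def)
              next
                case False
                show ?thesis
                proof (cases "j = j1")
                  case True thus ?thesis using j0 j1 by (simp add: h_def)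
                next
                  case False2: False
                  have "s ! j \<noteq> t" using sne j j0 False by metis
                  moreover have "s ! j \<noteq> Suc t" using sne j j1 False2 by metis
                  ultimately show ?thesis using False False2 by (simp add: h_def)
                qed
              qed
              thus ?thesis using so s'_def j ls by simp
            qed
          qed
          also have "(\<Prod>j<k. F4 (s ! j) (map h s ! j)) = (\<Prod>j<length s. F4 (s ! j) (h (s ! j)))"
            using ls by (intro prod.cong) auto
          also have "\<dots> = (\<Prod>i\<in>S. F4 i (h i))" using prod_nth_set[OF ds] sets by simp
          also have "\<dots> = F4 t (h t) * (\<Prod>i\<in>S - {t}. F4 i (h i))" using prod.remove[OF fS tS] .
          also have "(\<Prod>i\<in>S - {t}. F4 i (h i)) = F4 (Suc t) (h (Suc t)) * qq ^ (card (S - {t}) - 1)"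
            by (rule prod_remove_const) (use fS t1S in \<open>auto simp: F4_def g_def Phi_basis_def tbasis_def h_def\<close>)
          finally have PF: "PS F4 T = of_int (sign (Transposition.transpose j0 j1)) *
              (F4 t (h t) * (F4 (Suc t) (h (Suc t)) * qq ^ (card (S - {t}) - 1)))" .
          have a1: "sign (Transposition.transpose j0 j1) = -1" using j01 by (simp add: sign_swap_id)
          have a2: "F4 t (h t) = 1" by (simp add: F4_def g_def g_t h_def)
          have a3: "F4 (Suc t) (h (Suc t)) = 1" by (simp add: F4_def h_def)
          have a4: "card (S - {t}) - 1 = k - 2" using fS tS k by simp
          have PF2: "PS F4 T = - (qq ^ (k - 2))" unfolding PF a1 a2 a3 a4 by simp
          have pw: "qq ^ (k - 1) = qq * qq ^ (k - 2)"
          proof -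
            have "k - 1 = Suc (k - 2)" using k2 by simp
            thus ?thesis by (simp only: power_Suc)
          qed
          have P: "Phi_basis t S T = - inverse qq" using tS t1S True by (simp add: Phi_basis_def tbasis_def)
          have Wv: "wedge n (map (\<lambda>i. Phi n t (tbasis {i})) (sorted_list_of_set S)) T = - (qq ^ (k - 2))"
            unfolding W if_P[OF C] eq PF2 ..
          have "qq ^ (k - 1) * Phi_basis t S T = - (qq ^ (k - 2)) * (qq * inverse qq)"
            unfolding P pw by (simp only: mult_ac mult_minus_right mult_minus_left)
          also have "\<dots> = - (qq ^ (k - 2))" using qq_nz by simp
          finally show ?thesis using Wv by simp
        qed
      qed
    qed
  qed
qed

lemma psi_eval: "psi n f T = (if T \<subseteq> {1..n} then f T else 0)"
proof -
  have "psi n f T = (\<Sum>S\<in>Pow {1..n}. if S = T then f S else 0)"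
    unfolding psi_def by (intro sum.cong) (auto simp: tbasis_def)
  thus ?thesis by (simp add: sum.delta')
qed

lemma support:
  assumes "v \<in> wedge_H1 n k" "v S \<noteq> 0"
  shows "S \<subseteq> {1..n} \<and> card S = k"
proof -
  have "\<exists>(m::nat) c x. (\<forall>i<m. x i \<in> {wedge n xs | xs. length xs = k \<and> set xs \<subseteq> Hspace n 1}) \<and>
      v = (\<lambda>T. \<Sum>i<m. c i * x i T)"
    using assms(1) unfolding wedge_H1_def fin_lincombs_def by (rule CollectD)
  then obtain m :: nat and c x where x: "\<forall>i<m. x i \<in> {wedge n xs | xs. length xs = k \<and> set xs \<subseteq> Hspace n 1}"
    and v: "v = (\<lambda>T. \<Sum>i<m. c i * x i T)" by blast
  have ne: "(\<Sum>i<m. c i * x i S) \<noteq> 0" using assms(2) v by simp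
  have "\<exists>i\<in>{..<m}. c i * x i S \<noteq> 0"
  proof (rule ccontr)
    assume "\<not> (\<exists>i\<in>{..<m}. c i * x i S \<noteq> 0)"
    hence "(\<Sum>i<m. c i * x i S) = 0" by (intro sum.neutral) blast
    thus False using ne by simp
  qed
  then obtain i where i: "i < m" "x i S \<noteq> 0" by auto
  then obtain xs where "x i = wedge n xs" "length xs = k" using x by blast
  show ?thesis
  proof (rule ccontr)
    assume nc: "\<not> (S \<subseteq> {1..n} \<and> card S = k)"
    have "wedge n xs S = 0" using nc \<open>length xs = k\<close> by (simp only: wedge_def if_not_P if_False)
    thus False using i \<open>x i = wedge n xs\<close> by simp
  qed
qed

lemma Phi_basis_support:
  assumes "S \<subseteq> {1..n}" "1 \<le> t" "Suc t \<le> n" "Phi_basis t S T \<noteq> 0"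
  shows "T \<subseteq> {1..n}"
proof (rule ccontr)
  assume nT: "\<not> T \<subseteq> {1..n}"
  have "T \<noteq> S" using nT assms(1) by auto
  moreover have "T \<noteq> insert (Suc t) (S - {t})" using nT assms(1,3) by auto
  moreover have "T \<noteq> insert t (S - {Suc t})" using nT assms(1,2,3) by auto
  ultimately have "Phi_basis t S T = 0" by (simp add: Phi_basis_def tbasis_def)
  thus False using assms(4) by simp
qed

theorem proposition1p3:
  fixes n k t :: nat and v :: vec
  assumes "n \<ge> 2" and "1 \<le> k" and "k \<le> n - 1"
    and "1 \<le> t" and "t \<le> n - 1"
    and "v \<in> wedge_H1 n k"
  shows "psi n (wedge_act n t v) = (\<lambda>T. qq ^ (k - 1) * Phi n t (psi n v) T)"
proof
  fix T
  have t1: "Suc t \<le> n" using assms(1,5) by linarith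
  have wa: "wedge_act n t v T = (\<Sum>S\<in>Pow {1..n}. qq ^ (k - 1) * (v S * Phi_basis t S T))"
    unfolding wedge_act_def
  proof (rule sum.cong[OF refl])
    fix S assume S: "S \<in> Pow {1..n}"
    show "v S * wedge n (map (\<lambda>i. Phi n t (tbasis {i})) (sorted_list_of_set S)) T =
        qq ^ (k - 1) * (v S * Phi_basis t S T)"
    proof (cases "v S = 0")
      case False
      have cS: "card S = k" using support[OF assms(6) False] by blast
      have "wedge n (map (\<lambda>i. Phi n t (tbasis {i})) (sorted_list_of_set S)) T = qq ^ (k - 1) * Phi_basis t S T"
        by (rule key[OF _ cS assms(2,4) t1]) (use S in blast)
      thus ?thesis by (simp only: mult.left_commute)
    qed simp
  qed
  have rhs: "Phi n t (psi n v) T = (\<Sum>S\<in>Pow {1..n}. v S * Phi_basis t S T)"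
    unfolding Phi_def
  proof (rule sum.cong[OF refl])
    fix S assume "S \<in> Pow {1..n}"
    hence "psi n v S = v S" by (simp add: psi_eval)
    thus "psi n v S * Phi_basis t S T = v S * Phi_basis t S T" by (simp only:)
  qed
  show "psi n (wedge_act n t v) T = qq ^ (k - 1) * Phi n t (psi n v) T"
  proof (cases "T \<subseteq> {1..n}")
    case True
    have "psi n (wedge_act n t v) T = wedge_act n t v T" using True by (simp add: psi_eval)
    also have "\<dots> = qq ^ (k - 1) * Phi n t (psi n v) T" unfolding wa rhs by (simp only: sum_distrib_left)
    finally show ?thesis .
  next
    case False
    have "Phi n t (psi n v) T = 0" unfolding rhs
    proof (rule sum.neutral, rule ballI)
      fix S assume "S \<in> Pow {1..n}"
      hence "Phi_basis t S T = 0" using Phi_basis_support[of S n t T] assms(4) t1 False by blast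
      thus "v S * Phi_basis t S T = 0" by simp
    qed
    moreover have "psi n (wedge_act n t v) T = 0" using False by (simp add: psi_eval)
    ultimately show ?thesis by simp
  qed
qed

end
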